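(* There is an absolute constant $c>0$ such that the following holds. Let $n\ge5$ be odd, $k=\frac{n-3}{2}$, $G=(V,E)=K_n$, let $C=(v_1,\dots,v_{2k+1})$ be a cycle of length $n-2$ in $G$ with $s,t$ the two vertices not on $C$, and let $F$ be the facet of $P_{(\widehat G,\widehat R)}$ defined by the canonical transformation of the $C$-induced constraint $x_{\{s,t\}}+k\cdot x(\delta(V(C)))+\sum_{e\in E[V\setminus\{s,t\}]}\ell(e)x_e\ge 2k+1$. Then there exist $\widehat a\in\mathbb{Z}^{\widehat E}$ and $\widehat b\in\mathbb{Z}$ such that $F=\{y\in P_{(\widehat G,\widehat R)}\colon \widehat a^\top y=\widehat b\}$ and $|\{\widehat a_{\widehat e}\colon\widehat e\in\widehat E\}|\le c\,n^{2/3}$.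
   Context: $\delta(V(C))$ is the set of edges with exactly one endpoint on $C$, $E[S]$ the set of edges with both endpoints in $S$, $x(S)=\sum_{e\in S}x_e$; for $i\ne j$, $\ell(\{v_i,v_j\})=|j-i|$ if $|j-i|$ is odd and $2k+1-|j-i|$ otherwise. The bipartite graph $\widehat G=(\widehat V,\widehat E)$ has vertex set $\{v^+\colon v\in V\}\cup\{v^-\colon v\in V\}$ and edges $\{v^+,v^-\}$ for $v\in V$ and $\{u^+,v^-\},\{u^-,v^+\}$ for each $\{u,v\}\in E$; red edges $\widehat R=\widehat E\setminus\{\{v^+,v^-\}\colon v\in V\}$. $P_{(\widehat G,\widehat R)}$ is the convex hull of incidence vectors of perfect matchings $M$ of $\widehat G$ with $|M\cap\widehat R|$ odd. The canonical transformation of $\sum_{e\in E}a_ex_e\ge b$ is $\sum_{\{u,v\}\in E}a_{\{u,v\}}(y_{\{u^+,v^-\}}+y_{\{u^-,v^+\}})\ge b$. (This canonical transformation defines a facet of $P_{(\widehat G,\widehat R)}$.) *)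

theory Defs
  imports Complex_Main
begin

definition Kn_edges :: "nat set \<Rightarrow> nat set set" where
  "Kn_edges V = {e. e \<subseteq> V \<and> card e = 2}"

definition cut_edges :: "nat set set \<Rightarrow> nat set \<Rightarrow> nat set set" where
  "cut_edges E S = {e \<in> E. card (e \<inter> S) = 1}"

definition induced_edges :: "nat set set \<Rightarrow> nat set \<Rightarrow> nat set set" where
  "induced_edges E S = {e \<in> E. e \<subseteq> S}"

definition cyc_len :: "nat \<Rightarrow> (nat \<Rightarrow> nat) \<Rightarrow> nat set \<Rightarrow> nat" where
  "cyc_len k v e = (THE d. \<exists>i j. i \<in> {1..2*k+1} \<and> j \<in> {1..2*k+1} \<and> i \<noteq> j \<and>
      e = {v i, v j} \<and>
      d = (let m = (if i \<le> j then j - i else i - j) in if odd m then m else 2*k+1 - m))"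

(* Bipartite graph hat G: v^+ = (v, True), v^- = (v, False) *)
definition hat_vertices :: "nat set \<Rightarrow> (nat \<times> bool) set" where
  "hat_vertices V = V \<times> UNIV"

definition hat_edges :: "nat set \<Rightarrow> nat set set \<Rightarrow> (nat \<times> bool) set set" where
  "hat_edges V E = {{(v, True), (v, False)} | v. v \<in> V}
     \<union> {{(u, True), (v, False)} | u v. {u, v} \<in> E}
     \<union> {{(u, False), (v, True)} | u v. {u, v} \<in> E}"

definition red_edges :: "nat set \<Rightarrow> nat set set \<Rightarrow> (nat \<times> bool) set set" where
  "red_edges V E = hat_edges V E - {{(v, True), (v, False)} | v. v \<in> V}"

definition perfect_matching :: "'b set \<Rightarrow> 'b set set \<Rightarrow> 'b set set \<Rightarrow> bool" where
  "perfect_matching VV EE M \<longleftrightarrow> M \<subseteq> EE \<and> (\<forall>x\<in>VV. \<exists>!e. e \<in> M \<and> x \<in> e)"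

definition incidence :: "'b set \<Rightarrow> 'b \<Rightarrow> real" where
  "incidence M = (\<lambda>e. if e \<in> M then 1 else 0)"

definition conv_hull_fun :: "('b \<Rightarrow> real) set \<Rightarrow> ('b \<Rightarrow> real) set" where
  "conv_hull_fun S = {y. \<exists>T w. finite T \<and> T \<subseteq> S \<and> (\<forall>x\<in>T. w x \<ge> 0) \<and> sum w T = 1
      \<and> y = (\<lambda>e. \<Sum>x\<in>T. w x * x e)}"

definition P_hat :: "nat set \<Rightarrow> nat set set \<Rightarrow> ((nat \<times> bool) set \<Rightarrow> real) set" where
  "P_hat V E = conv_hull_fun {incidence M | M.
      perfect_matching (hat_vertices V) (hat_edges V E) M \<and> odd (card (M \<inter> red_edges V E))}"

(* canonical transformation of sum_{e in E} a_e x_e: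
   sum_{{u,v} in E} a_{{u,v}} (y_{{u+,v-}} + y_{{u-,v+}}) *)
definition canon_lhs :: "nat set set \<Rightarrow> (nat set \<Rightarrow> real) \<Rightarrow> ((nat \<times> bool) set \<Rightarrow> real) \<Rightarrow> real" where
  "canon_lhs E a y = (\<Sum>e\<in>E. a e * (\<Sum>p\<in>e. \<Sum>q\<in>e - {p}. y {(p, True), (q, False)}))"

definition C_induced_coeff :: "nat set \<Rightarrow> nat \<Rightarrow> (nat \<Rightarrow> nat) \<Rightarrow> nat \<Rightarrow> nat \<Rightarrow> nat set \<Rightarrow> real" where
  "C_induced_coeff V k v s t e =
     (if e = {s, t} then 1 else 0)
     + real k * (if e \<in> cut_edges (Kn_edges V) (v ` {1..2*k+1}) then 1 else 0)
     + (if e \<in> induced_edges (Kn_edges V) (V - {s, t}) then real (cyc_len k v e) else 0)"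

end

theory Submission
  imports Defs
begin


definition hf :: "nat \<Rightarrow> nat \<Rightarrow> (nat \<times> bool) set" where
  "hf u w = {(u,True),(w,False)}"

lemma hf_inj: "hf u w = hf u' w' \<Longrightarrow> u = u' \<and> w = w'"
  unfolding hf_def by (auto simp: doubleton_eq_iff)

lemma hf_inj_on: "inj_on (\<lambda>(u,w). hf u w) A"
  by (auto simp: inj_on_def dest: hf_inj)

lemma Kn_pair: "u \<in> V \<Longrightarrow> w \<in> V \<Longrightarrow> u \<noteq> w \<Longrightarrow> {u,w} \<in> Kn_edges V"
  by (auto simp: Kn_edges_def)

lemma Kn_edge_elim: "e \<in> Kn_edges V \<Longrightarrow> \<exists>u w. u\<in>V \<and> w\<in>V \<and> u\<noteq>w \<and> e={u,w}"
  unfolding Kn_edges_def by (auto simp: card_2_iff)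

lemma Kn_pairD: "{u,w} \<in> Kn_edges V \<Longrightarrow> u\<in>V \<and> w\<in>V \<and> u\<noteq>w"
  unfolding Kn_edges_def by (auto simp: card_2_iff)

lemma hat_edges_Kn: "hat_edges V (Kn_edges V) = (\<lambda>(u,w). hf u w) ` (V \<times> V)"
proof
  show "hat_edges V (Kn_edges V) \<subseteq> (\<lambda>(u,w). hf u w) ` (V \<times> V)"
    unfolding hat_edges_def
  proof (safe)
    fix v assume "v \<in> V" thus "{(v, True), (v, False)} \<in> (\<lambda>(u,w). hf u w) ` (V \<times> V)"
      by (force simp: hf_def)
  next
    fix u v assume "{u,v} \<in> Kn_edges V"
    then have "u \<in> V" "v \<in> V" using Kn_pairD by auto
    then show "{(u, True), (v, False)} \<in> (\<lambda>(u,w). hf u w) ` (V \<times> V)"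
      by (force simp: hf_def)
  next
    fix u v assume "{u,v} \<in> Kn_edges V"
    then have "u \<in> V" "v \<in> V" using Kn_pairD by auto
    then have "{(u, False), (v, True)} = hf v u" by (auto simp: hf_def)
    then show "{(u, False), (v, True)} \<in> (\<lambda>(u,w). hf u w) ` (V \<times> V)"
      using \<open>u \<in> V\<close> \<open>v \<in> V\<close> by force
  qed
next
  show "(\<lambda>(u,w). hf u w) ` (V \<times> V) \<subseteq> hat_edges V (Kn_edges V)"
  proof clarify
    fix u w assume uw: "u \<in> V" "w \<in> V"
    show "hf u w \<in> hat_edges V (Kn_edges V)"
    proof (cases "u = w")
      case True then show ?thesis using uw unfolding hat_edges_def hf_def by blast
    next
      case False then have "{u,w} \<in> Kn_edges V" using uw Kn_pair by auto
      then show ?thesis unfolding hat_edges_def hf_def by blast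
    qed
  qed
qed

lemma pm_row:
  assumes pm: "perfect_matching (hat_vertices V) (hat_edges V (Kn_edges V)) M" and u: "u \<in> V"
    and fin: "finite V"
  shows "(\<Sum>w\<in>V. incidence M (hf u w)) = 1"
proof -
  have "(u,True) \<in> hat_vertices V" using u by (simp add: hat_vertices_def)
  then obtain e where e: "e \<in> M" "(u,True) \<in> e" and uq: "\<And>e'. e' \<in> M \<Longrightarrow> (u,True) \<in> e' \<Longrightarrow> e' = e"
    using pm unfolding perfect_matching_def by metis
  have "e \<in> hat_edges V (Kn_edges V)" using pm e unfolding perfect_matching_def by auto
  then obtain u' w0 where w0: "u' \<in> V" "w0 \<in> V" "e = hf u' w0" using hat_edges_Kn by auto
  then have "u' = u" using e by (auto simp: hf_def)
  have S: "{w\<in>V. hf u w \<in> M} = {w0}"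
  proof
    show "{w\<in>V. hf u w \<in> M} \<subseteq> {w0}"
    proof clarify
      fix w assume "w \<in> V" "hf u w \<in> M"
      then have "hf u w = e" using uq by (auto simp: hf_def)
      then show "w = w0" using w0 \<open>u' = u\<close> hf_inj by metis
    qed
  next
    show "{w0} \<subseteq> {w\<in>V. hf u w \<in> M}" using w0 e \<open>u' = u\<close> by auto
  qed
  have "(\<Sum>w\<in>V. incidence M (hf u w)) = (\<Sum>w\<in>V. if hf u w \<in> M then 1 else 0)"
    by (simp add: incidence_def)
  also have "\<dots> = real (card {w\<in>V. hf u w \<in> M})"
    using fin by (simp add: sum.If_cases Collect_conj_eq)
  also have "\<dots> = 1" using S by simp
  finally show ?thesis .
qed

lemma pm_col:
  assumes pm: "perfect_matching (hat_vertices V) (hat_edges V (Kn_edges V)) M" and w: "w \<in> V"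
    and fin: "finite V"
  shows "(\<Sum>u\<in>V. incidence M (hf u w)) = 1"
proof -
  have "(w,False) \<in> hat_vertices V" using w by (simp add: hat_vertices_def)
  then obtain e where e: "e \<in> M" "(w,False) \<in> e" and uq: "\<And>e'. e' \<in> M \<Longrightarrow> (w,False) \<in> e' \<Longrightarrow> e' = e"
    using pm unfolding perfect_matching_def by metis
  have "e \<in> hat_edges V (Kn_edges V)" using pm e unfolding perfect_matching_def by auto
  then obtain u0 w' where w0: "u0 \<in> V" "w' \<in> V" "e = hf u0 w'" using hat_edges_Kn by auto
  then have "w' = w" using e by (auto simp: hf_def)
  have S: "{u\<in>V. hf u w \<in> M} = {u0}"
  proof
    show "{u\<in>V. hf u w \<in> M} \<subseteq> {u0}"
    proof clarify
      fix u assume "u \<in> V" "hf u w \<in> M"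
      then have "hf u w = e" using uq by (auto simp: hf_def)
      then show "u = u0" using w0 \<open>w' = w\<close> hf_inj by metis
    qed
  next
    show "{u0} \<subseteq> {u\<in>V. hf u w \<in> M}" using w0 e \<open>w' = w\<close> by auto
  qed
  have "(\<Sum>u\<in>V. incidence M (hf u w)) = (\<Sum>u\<in>V. if hf u w \<in> M then 1 else 0)"
    by (simp add: incidence_def)
  also have "\<dots> = real (card {u\<in>V. hf u w \<in> M})"
    using fin by (simp add: sum.If_cases Collect_conj_eq)
  also have "\<dots> = 1" using S by simp
  finally show ?thesis .
qed

lemma P_row:
  assumes "y \<in> P_hat V (Kn_edges V)" "finite V" "u \<in> V"
  shows "(\<Sum>w\<in>V. y (hf u w)) = 1"
proof -
  obtain T wt where T: "finite T" "T \<subseteq> {incidence M | M.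
      perfect_matching (hat_vertices V) (hat_edges V (Kn_edges V)) M \<and> odd (card (M \<inter> red_edges V (Kn_edges V)))}"
    "sum wt T = 1" "y = (\<lambda>e. \<Sum>x\<in>T. wt x * x e)"
    using assms(1) unfolding P_hat_def conv_hull_fun_def by blast
  have "(\<Sum>w\<in>V. y (hf u w)) = (\<Sum>x\<in>T. wt x * (\<Sum>w\<in>V. x (hf u w)))"
    using T(4) by (simp add: sum_distrib_left sum.swap[of _ V])
  also have "\<dots> = (\<Sum>x\<in>T. wt x)"
  proof (rule sum.cong[OF refl])
    fix x assume "x \<in> T"
    then obtain M where "x = incidence M" "perfect_matching (hat_vertices V) (hat_edges V (Kn_edges V)) M"
      using T(2) by blast
    then show "wt x * (\<Sum>w\<in>V. x (hf u w)) = wt x" using pm_row assms by simp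
  qed
  finally show ?thesis using T(3) by simp
qed

lemma P_col:
  assumes "y \<in> P_hat V (Kn_edges V)" "finite V" "w \<in> V"
  shows "(\<Sum>u\<in>V. y (hf u w)) = 1"
proof -
  obtain T wt where T: "finite T" "T \<subseteq> {incidence M | M.
      perfect_matching (hat_vertices V) (hat_edges V (Kn_edges V)) M \<and> odd (card (M \<inter> red_edges V (Kn_edges V)))}"
    "sum wt T = 1" "y = (\<lambda>e. \<Sum>x\<in>T. wt x * x e)"
    using assms(1) unfolding P_hat_def conv_hull_fun_def by blast
  have "(\<Sum>u\<in>V. y (hf u w)) = (\<Sum>x\<in>T. wt x * (\<Sum>u\<in>V. x (hf u w)))"
    using T(4) by (simp add: sum_distrib_left sum.swap[of _ V])
  also have "\<dots> = (\<Sum>x\<in>T. wt x)"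
  proof (rule sum.cong[OF refl])
    fix x assume "x \<in> T"
    then obtain M where "x = incidence M" "perfect_matching (hat_vertices V) (hat_edges V (Kn_edges V)) M"
      using T(2) by blast
    then show "wt x * (\<Sum>u\<in>V. x (hf u w)) = wt x" using pm_col assms by simp
  qed
  finally show ?thesis using T(3) by simp
qed

lemma canon_eq:
  assumes fin: "finite V"
  shows "canon_lhs (Kn_edges V) a y =
    (\<Sum>z\<in>{z\<in>V\<times>V. fst z \<noteq> snd z}. a {fst z, snd z} * y (hf (fst z) (snd z)))"
proof -
  let ?Off = "{z\<in>V\<times>V. fst z \<noteq> snd z}"
  let ?h = "\<lambda>z. a {fst z, snd z} * y (hf (fst z) (snd z))"
  have "Kn_edges V \<subseteq> Pow V" unfolding Kn_edges_def by blast
  then have finE: "finite (Kn_edges V)" using fin by (simp add: finite_subset)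
  have finO: "finite ?Off" using fin by auto
  have img: "(\<lambda>z. {fst z, snd z}) ` ?Off \<subseteq> Kn_edges V" using Kn_pair by auto
  have "(\<Sum>z\<in>?Off. ?h z) = (\<Sum>e\<in>Kn_edges V. \<Sum>z\<in>{z. z \<in> ?Off \<and> {fst z, snd z} = e}. ?h z)"
    using sum.group[OF finO finE img, of ?h] by simp
  also have "\<dots> = (\<Sum>e\<in>Kn_edges V. a e * (\<Sum>p\<in>e. \<Sum>q\<in>e - {p}. y {(p, True), (q, False)}))"
  proof (rule sum.cong[OF refl])
    fix e assume "e \<in> Kn_edges V"
    then obtain u w where uw: "u\<in>V" "w\<in>V" "u\<noteq>w" "e={u,w}" using Kn_edge_elim by blast
    have "{z. z \<in> ?Off \<and> {fst z, snd z} = e} = Sigma e (\<lambda>p. e - {p})"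
      using uw by (auto simp: doubleton_eq_iff)
    moreover have "finite e" using uw by simp
    ultimately have "(\<Sum>z\<in>{z. z \<in> ?Off \<and> {fst z, snd z} = e}. ?h z) = (\<Sum>p\<in>e. \<Sum>q\<in>e - {p}. ?h (p,q))"
      by (simp add: sum.Sigma split_def)
    also have "\<dots> = (\<Sum>p\<in>e. \<Sum>q\<in>e - {p}. a e * y {(p, True), (q, False)})"
      using uw by (intro sum.cong refl) (auto simp: hf_def insert_commute)
    finally show "(\<Sum>z\<in>{z. z \<in> ?Off \<and> {fst z, snd z} = e}. ?h z) = a e * (\<Sum>p\<in>e. \<Sum>q\<in>e - {p}. y {(p, True), (q, False)})"
      by (simp add: sum_distrib_left)
  qed
  finally show ?thesis unfolding canon_lhs_def by simp
qed



lemma exists_p: assumes "(1::nat) \<le> m" shows "\<exists>p\<ge>1. m \<le> p^3 \<and> p^3 \<le> 8*m"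
proof -
  define p where "p = (LEAST p. m \<le> p^3)"
  have ex: "m \<le> m^3" using assms by (simp add: power3_eq_cube)
  have p1: "m \<le> p^3" unfolding p_def by (rule LeastI[of _ m]) (rule ex)
  have p2: "\<And>q. q < p \<Longrightarrow> \<not> m \<le> q^3" unfolding p_def using not_less_Least by blast
  have "p \<ge> 1" using p1 assms by (cases p) auto
  moreover have "p^3 \<le> 8*m"
  proof (cases "p = 1")
    case True then show ?thesis using assms by simp
  next
    case False
    then have "p - 1 < p" "p \<le> 2*(p-1)" using \<open>p\<ge>1\<close> by auto
    then have "(p-1)^3 < m" using p2 by force
    have "p^3 \<le> (2*(p-1))^3" using \<open>p \<le> 2*(p-1)\<close> by (rule power_mono) simp
    also have "\<dots> = 8 * (p-1)^3" by (simp add: power_mult_distrib)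
    finally show ?thesis using \<open>(p-1)^3 < m\<close> by linarith
  qed
  ultimately show ?thesis using p1 by blast
qed

lemma p_bound: assumes "p^3 \<le> 8*n" "n \<ge> 1" "p \<ge> 1"
  shows "real p ^ 2 \<le> 4 * real n powr (2/3)"
proof -
  have "real p ^ 3 = real p powr 3" using assms(3) by (simp add: powr_realpow)
  then have "(real p ^ 3) powr (1/3) = real p powr (3 * (1/3))"
    by (simp only: powr_powr)
  then have "real p = (real p ^ 3) powr (1/3)" using assms(3) by simp
  also have "\<dots> \<le> (8 * real n) powr (1/3)"
    using assms(1) by (intro powr_mono2) (simp_all, metis of_nat_le_iff of_nat_mult of_nat_numeral of_nat_power)
  also have "\<dots> = 2 * real n powr (1/3)"
  proof -
    have "(8::real) powr (1/3) = 2"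
      by (simp add: powr_numeral[symmetric])
    then show ?thesis by (simp add: powr_mult)
  qed
  finally have "real p \<le> 2 * real n powr (1/3)" .
  then have "real p ^ 2 \<le> (2 * real n powr (1/3))^2" by (intro power_mono) auto
  also have "\<dots> = 4 * real n powr (2/3)"
    by (simp add: power2_eq_square powr_add[symmetric])
  finally show ?thesis .
qed



definition ell :: "nat \<Rightarrow> nat \<Rightarrow> nat \<Rightarrow> nat" where
  "ell m i j = (let d = (if i \<le> j then j - i else i - j) in if odd d then d else m - d)"

definition XX :: "nat \<Rightarrow> nat \<Rightarrow> int" where
  "XX p i = int (i mod p) - int (p*p) * int (i div (p*p))"

definition D1 :: "nat \<Rightarrow> nat \<Rightarrow> int set" where
  "D1 p A = (\<lambda>(a,b). 2*int(p*p)*a + int p * b) ` ({-int A..int A} \<times> {-int p..int p})"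
definition D2 :: "nat \<Rightarrow> int set" where
  "D2 p = (\<lambda>(b,c). int p * b + 2*c) ` ({-int p..int p} \<times> {-int p..int p})"
definition Xs :: "nat \<Rightarrow> nat \<Rightarrow> int set" where
  "Xs p A = (\<lambda>(c,a). c - int(p*p) * a) ` ({0..int p} \<times> {0..int A})"

lemma decomp: "(i::nat) = p*p*(i div (p*p)) + p*((i div p) mod p) + i mod p"
  by (metis add.assoc div_mult_mod_eq mod_mult2_eq mult.commute)

lemma XX_minus: "XX p i - int i = - 2*int(p*p)*int(i div (p*p)) - int p * int ((i div p) mod p)"
proof -
  have "int i = int (p*p*(i div (p*p)) + p*((i div p) mod p) + i mod p)" using decomp by metis
  then show ?thesis unfolding XX_def by (simp add: algebra_simps)
qed

lemma XX_plus: "XX p i + int i = 2 * int (i mod p) + int p * int ((i div p) mod p)"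
proof -
  have "int i = int (p*p*(i div (p*p)) + p*((i div p) mod p) + i mod p)" using decomp by metis
  then show ?thesis unfolding XX_def by (simp add: algebra_simps)
qed

lemma P1_in: assumes "p > 0" "i \<le> m" "j \<le> m"
  shows "(XX p i - int i) - (XX p j - int j) \<in> D1 p (m div (p*p))"
proof -
  have ai: "i div (p*p) \<le> m div (p*p)" "j div (p*p) \<le> m div (p*p)" using assms by (auto intro: div_le_mono)
  have b: "(i div p) mod p < p" "(j div p) mod p < p" using assms by auto
  note b' = b[THEN less_imp_le, THEN of_nat_mono[where ?'a=int]]
  have "(XX p i - int i) - (XX p j - int j) =
     2*int(p*p)*(int (j div (p*p)) - int (i div (p*p))) + int p * (int ((j div p) mod p) - int ((i div p) mod p))"
    unfolding XX_minus by (simp add: algebra_simps)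
  moreover have "(int (j div (p*p)) - int (i div (p*p)), int ((j div p) mod p) - int ((i div p) mod p))
      \<in> {-int (m div (p*p))..int (m div (p*p))} \<times> {-int p..int p}"
    using ai b' by auto
  ultimately show ?thesis unfolding D1_def
    by (auto intro!: image_eqI[where x="(int (j div (p*p)) - int (i div (p*p)), int ((j div p) mod p) - int ((i div p) mod p))"])
qed

lemma P2_in: assumes "p > 0"
  shows "(XX p i + int i) - (XX p j + int j) \<in> D2 p"
proof -
  have b: "(i div p) mod p < p" "(j div p) mod p < p" "i mod p < p" "j mod p < p" using assms by auto
  note b' = b[THEN less_imp_le, THEN of_nat_mono[where ?'a=int]]
  have "(XX p i + int i) - (XX p j + int j) =
     int p * (int ((i div p) mod p) - int ((j div p) mod p)) + 2 * (int (i mod p) - int (j mod p))"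
    unfolding XX_plus by (simp add: algebra_simps)
  moreover have "(int ((i div p) mod p) - int ((j div p) mod p), int (i mod p) - int (j mod p))
      \<in> {-int p..int p} \<times> {-int p..int p}"
    using b' by auto
  ultimately show ?thesis unfolding D2_def
    by (auto intro!: image_eqI[where x="(int ((i div p) mod p) - int ((j div p) mod p), int (i mod p) - int (j mod p))"])
qed

lemma XX_in: assumes "p > 0" "i \<le> m"
  shows "XX p i \<in> Xs p (m div (p*p))"
proof -
  have "i div (p*p) \<le> m div (p*p)" "i mod p < p" using assms by (auto intro: div_le_mono)
  then show ?thesis unfolding Xs_def XX_def by (auto intro!: image_eqI[where x="(int (i mod p), int (i div (p*p)))"])
qed

lemma ell_in: assumes "p > 0" "i \<le> m" "j \<le> m"
  shows "int (ell m i j) + XX p i - XX p j \<in> D1 p (m div (p*p)) \<union> D2 p \<union> (+) (int m) ` D1 p (m div (p*p)) \<union> (+) (int m) ` D2 p"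
proof -
  let ?P1 = "(XX p i - int i) - (XX p j - int j)"
  let ?P2 = "(XX p i + int i) - (XX p j + int j)"
  have "int (ell m i j) + XX p i - XX p j \<in> {?P1, ?P2, int m + ?P1, int m + ?P2}"
    using assms unfolding ell_def Let_def by (auto simp: of_nat_diff algebra_simps)
  then have d: "int (ell m i j) + XX p i - XX p j = ?P1 \<or> int (ell m i j) + XX p i - XX p j = ?P2 \<or>
     int (ell m i j) + XX p i - XX p j = int m + ?P1 \<or> int (ell m i j) + XX p i - XX p j = int m + ?P2"
    by (simp only: insert_iff empty_iff simp_thms)
  moreover have "?P1 \<in> D1 p (m div (p*p))" by (rule P1_in[OF assms])
  moreover have "?P2 \<in> D2 p" by (rule P2_in[OF assms(1)])
  moreover have "int m + ?P1 \<in> (+) (int m) ` D1 p (m div (p*p))" by (rule imageI) (rule P1_in[OF assms])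
  moreover have "int m + ?P2 \<in> (+) (int m) ` D2 p" by (rule imageI) (rule P2_in[OF assms(1)])
  ultimately show ?thesis using d by (metis UnI1 UnI2)
qed

lemma nat_2a1[simp]: "nat (2 * int a + 1) = 2*a+1" by (simp add: nat_add_distrib nat_mult_distrib)
lemma nat_a1[simp]: "nat (int a + 1) = a+1" by (simp add: nat_add_distrib)
lemma card_sym: "card {-int a..int a} = 2*a+1" by (simp add: nat_add_distrib)
lemma card_0i: "card {0..int a} = a+1" by simp

definition SS :: "nat \<Rightarrow> nat \<Rightarrow> nat \<Rightarrow> nat \<Rightarrow> int set" where
  "SS p A m k = {0,1} \<union> D1 p A \<union> D2 p \<union> (+) (int m) ` D1 p A \<union> (+) (int m) ` D2 p
     \<union> (+) (int k) ` Xs p A \<union> (\<lambda>x. int k - x) ` Xs p A"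

lemma finite_SS: "finite (SS p A m k)"
  unfolding SS_def D1_def D2_def Xs_def by auto

lemma card_SS: assumes "A \<le> p" "p \<ge> 1"
  shows "card (SS p A m k) \<le> 46 * p^2"
proof -
  have c1: "card (D1 p A) \<le> (2*A+1)*(2*p+1)"
    unfolding D1_def by (rule order.trans[OF card_image_le]) (auto simp: card_cartesian_product card_sym card_0i)
  have c2: "card (D2 p) \<le> (2*p+1)*(2*p+1)"
    unfolding D2_def by (rule order.trans[OF card_image_le]) (auto simp: card_cartesian_product card_sym card_0i)
  have c3: "card (Xs p A) \<le> (p+1)*(A+1)"
    unfolding Xs_def by (rule order.trans[OF card_image_le]) (auto simp: card_cartesian_product card_sym card_0i)
  have f: "finite (D1 p A)" "finite (D2 p)" "finite (Xs p A)" unfolding D1_def D2_def Xs_def by auto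
  have "card (SS p A m k) \<le> 2 + card (D1 p A) + card (D2 p) + card (D1 p A) + card (D2 p) + card (Xs p A) + card (Xs p A)"
    unfolding SS_def
    by (rule order.trans[OF card_Un_le] add_mono card_image_le f order.refl | simp)+
  also have "\<dots> \<le> 2 + 2*((2*A+1)*(2*p+1)) + 2*((2*p+1)*(2*p+1)) + 2*((p+1)*(A+1))"
    using c1 c2 c3 by linarith
  also have "\<dots> \<le> 2 + 2*((2*p+1)*(2*p+1)) + 2*((2*p+1)*(2*p+1)) + 2*((p+1)*(p+1))"
    using assms by (intro add_mono mult_le_mono order.refl) auto
  also have "\<dots> \<le> 46 * p^2"
  proof -
    have a: "p \<le> p*p" "1 \<le> p*p" using assms by (simp_all add: le_square)
    show ?thesis apply (simp add: power2_eq_square algebra_simps) using a by linarith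
  qed
  finally show ?thesis .
qed



lemma ell_sym: "ell m i j = ell m j i"
  unfolding ell_def Let_def by auto

lemma cyc_len_val:
  assumes inj: "inj_on v {1..2*k+1}" and ij: "i \<in> {1..2*k+1}" "j \<in> {1..2*k+1}" "i \<noteq> j"
  shows "cyc_len k v {v i, v j} = ell (2*k+1) i j"
  unfolding cyc_len_def
proof (rule the_equality)
  show "\<exists>i' j'. i' \<in> {1..2*k+1} \<and> j' \<in> {1..2*k+1} \<and> i' \<noteq> j' \<and> {v i, v j} = {v i', v j'} \<and>
      ell (2*k+1) i j = (let m = (if i' \<le> j' then j' - i' else i' - j') in if odd m then m else 2*k+1 - m)"
    apply (rule exI[of _ i], rule exI[of _ j])
    using ij unfolding ell_def Let_def by blast
next
  fix d assume "\<exists>i' j'. i' \<in> {1..2*k+1} \<and> j' \<in> {1..2*k+1} \<and> i' \<noteq> j' \<and> {v i, v j} = {v i', v j'} \<and>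
      d = (let m = (if i' \<le> j' then j' - i' else i' - j') in if odd m then m else 2*k+1 - m)"
  then obtain i' j' where h: "i' \<in> {1..2*k+1}" "j' \<in> {1..2*k+1}" "{v i, v j} = {v i', v j'}"
    "d = ell (2*k+1) i' j'" unfolding ell_def by blast
  from h(3) have "(v i = v i' \<and> v j = v j') \<or> (v i = v j' \<and> v j = v i')" by (auto simp: doubleton_eq_iff)
  then have "(i = i' \<and> j = j') \<or> (i = j' \<and> j = i')"
    using inj ij h(1,2) by (auto dest: inj_onD)
  then show "d = ell (2*k+1) i j" using h(4) ell_sym by metis
qed

definition aI :: "nat \<Rightarrow> (nat \<Rightarrow> nat) \<Rightarrow> nat \<Rightarrow> nat \<Rightarrow> int" where
  "aI k v u w = (if u \<in> v`{1..2*k+1} \<and> w \<in> v`{1..2*k+1}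
      then int (ell (2*k+1) (inv_into {1..2*k+1} v u) (inv_into {1..2*k+1} v w))
      else if u \<in> v`{1..2*k+1} \<or> w \<in> v`{1..2*k+1} then int k else 1)"

lemma coeff_val:
  assumes inj: "inj_on v {1..2*k+1}" and st: "s \<noteq> t" "s \<notin> v`{1..2*k+1}" "t \<notin> v`{1..2*k+1}"
    and V: "V = v`{1..2*k+1} \<union> {s,t}" and uw: "u\<in>V" "w\<in>V" "u\<noteq>w"
  shows "C_induced_coeff V k v s t {u,w} = real_of_int (aI k v u w)"
proof -
  let ?C = "v`{1..2*k+1}"
  have E: "{u,w} \<in> Kn_edges V" using uw Kn_pair by auto
  show ?thesis
  proof (cases "u \<in> ?C \<and> w \<in> ?C")
    case True
    define i where "i = inv_into {1..2*k+1} v u"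
    define j where "j = inv_into {1..2*k+1} v w"
    have ij: "i \<in> {1..2*k+1}" "j \<in> {1..2*k+1}" "v i = u" "v j = w"
      using True unfolding i_def j_def by (meson inv_into_into f_inv_into_f)+
    then have "i \<noteq> j" using uw by auto
    have n1: "{u,w} \<noteq> {s,t}" using True st by (auto simp: doubleton_eq_iff)
    have n2: "{u,w} \<notin> cut_edges (Kn_edges V) ?C"
      using True uw unfolding cut_edges_def by auto
    have n3: "{u,w} \<in> induced_edges (Kn_edges V) (V - {s,t})"
      using True st E uw unfolding induced_edges_def by auto
    have "cyc_len k v {u,w} = ell (2*k+1) i j" using cyc_len_val[OF inj ij(1,2) \<open>i\<noteq>j\<close>] ij by simp
    then show ?thesis using True n1 n2 n3 unfolding C_induced_coeff_def aI_def i_def j_def by simp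
  next
    case False
    show ?thesis
    proof (cases "u \<in> ?C \<or> w \<in> ?C")
      case True
      have n1: "{u,w} \<noteq> {s,t}" using True st by (auto simp: doubleton_eq_iff)
      have "{u,w} \<inter> ?C = {u} \<or> {u,w} \<inter> ?C = {w}" using True False by auto
      then have n2: "{u,w} \<in> cut_edges (Kn_edges V) ?C"
        using E unfolding cut_edges_def by auto
      have n3: "{u,w} \<notin> induced_edges (Kn_edges V) (V - {s,t})"
        using True False V uw unfolding induced_edges_def by auto
      have "\<not> (u \<in> ?C \<and> w \<in> ?C)" using False by blast
      then show ?thesis using True n1 n2 n3 unfolding C_induced_coeff_def aI_def by (simp only: if_False if_True)
    next
      case False2: False
      have n1: "{u,w} = {s,t}" using False2 V uw by auto
      have n2: "{u,w} \<notin> cut_edges (Kn_edges V) ?C"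
        using False2 unfolding cut_edges_def by auto
      have n3: "{u,w} \<notin> induced_edges (Kn_edges V) (V - {s,t})"
        using n1 unfolding induced_edges_def by auto
      show ?thesis using False False2 n1 n2 n3 unfolding C_induced_coeff_def aI_def by simp
    qed
  qed
qed



lemma the_T: "(THE x. (x,True) \<in> hf u w) = u"
  by (rule the_equality) (auto simp: hf_def)
lemma the_F: "(THE x. (x,False) \<in> hf u w) = w"
  by (rule the_equality) (auto simp: hf_def)

theorem theorem15:
  "\<exists>c::real. c > 0 \<and>
    (\<forall>(n::nat) (k::nat) (V::nat set) (v::nat \<Rightarrow> nat) (s::nat) (t::nat).
      n \<ge> 5 \<longrightarrow> odd n \<longrightarrow> k = (n - 3) div 2 \<longrightarrow>
      finite V \<longrightarrow> card V = n \<longrightarrow>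
      inj_on v {1..2*k+1} \<longrightarrow> s \<noteq> t \<longrightarrow>
      s \<notin> v ` {1..2*k+1} \<longrightarrow> t \<notin> v ` {1..2*k+1} \<longrightarrow>
      V = v ` {1..2*k+1} \<union> {s, t} \<longrightarrow>
      (let E = Kn_edges V;
           F = {y \<in> P_hat V E. canon_lhs E (C_induced_coeff V k v s t) y = real (2*k+1)}
       in \<exists>(ah :: (nat \<times> bool) set \<Rightarrow> int) (bh :: int).
            F = {y \<in> P_hat V E. (\<Sum>e\<in>hat_edges V E. real_of_int (ah e) * y e) = real_of_int bh}
            \<and> real (card (ah ` hat_edges V E)) \<le> c * real n powr (2/3)))"
proof (rule exI[of _ 200], intro conjI allI impI)
  fix n k :: nat and V :: "nat set" and v :: "nat \<Rightarrow> nat" and s t :: nat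
  assume n5: "n \<ge> 5" and odd: "odd n" and kdef: "k = (n - 3) div 2" and fin: "finite V"
    and cardV: "card V = n" and inj: "inj_on v {1..2*k+1}" and st: "s \<noteq> t"
    "s \<notin> v ` {1..2*k+1}" "t \<notin> v ` {1..2*k+1}" and Vdef: "V = v ` {1..2*k+1} \<union> {s, t}"
  define m where "m = 2*k+1"
  have mn: "m \<le> n" "1 \<le> m" using n5 odd kdef unfolding m_def by auto
  obtain p where p: "p \<ge> 1" "m \<le> p^3" "p^3 \<le> 8*m" using exists_p[OF mn(2)] by blast
  define VC where "VC = v ` {1..2*k+1}"
  define idx where "idx = inv_into {1..2*k+1} v"
  define \<alpha> where "\<alpha> u = (if u \<in> VC then XX p (idx u) else 0)" for u
  define W where "W u w = (if u = w then 0 else aI k v u w) + \<alpha> u - \<alpha> w" for u w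
  define ah where "ah e = W (THE x. (x,True) \<in> e) (THE x. (x,False) \<in> e)" for e
  let ?E = "Kn_edges V"
  let ?H = "hat_edges V ?E"
  let ?a = "C_induced_coeff V k v s t"
  have H: "?H = (\<lambda>(u,w). hf u w) ` (V \<times> V)" by (rule hat_edges_Kn)
  have ahW: "ah (hf u w) = W u w" for u w unfolding ah_def the_T the_F ..
  have key: "(\<Sum>e\<in>?H. real_of_int (ah e) * y e) = canon_lhs ?E ?a y" if y: "y \<in> P_hat V ?E" for y
  proof -
    let ?Off = "{z\<in>V\<times>V. fst z \<noteq> snd z}"
    have finVV: "finite (V\<times>V)" using fin by simp
    have "(\<Sum>e\<in>?H. real_of_int (ah e) * y e) = (\<Sum>z\<in>V\<times>V. real_of_int (W (fst z) (snd z)) * y (hf (fst z) (snd z)))"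
      unfolding H by (subst sum.reindex[OF hf_inj_on]) (auto simp: ahW intro!: sum.cong)
    also have "\<dots> = (\<Sum>z\<in>V\<times>V. (if fst z \<noteq> snd z then ?a {fst z, snd z} * y (hf (fst z) (snd z)) else 0))
        + (\<Sum>z\<in>V\<times>V. real_of_int (\<alpha> (fst z)) * y (hf (fst z) (snd z)))
        - (\<Sum>z\<in>V\<times>V. real_of_int (\<alpha> (snd z)) * y (hf (fst z) (snd z)))"
    proof -
      have "real_of_int (W (fst z) (snd z)) * y (hf (fst z) (snd z)) =
         (if fst z \<noteq> snd z then ?a {fst z, snd z} * y (hf (fst z) (snd z)) else 0)
         + real_of_int (\<alpha> (fst z)) * y (hf (fst z) (snd z))
         - real_of_int (\<alpha> (snd z)) * y (hf (fst z) (snd z))" if z: "z \<in> V\<times>V" for z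
      proof (cases "fst z = snd z")
        case True then show ?thesis unfolding W_def by (simp add: algebra_simps)
      next
        case False
        have "?a {fst z, snd z} = real_of_int (aI k v (fst z) (snd z))"
          using coeff_val[OF inj st Vdef, of "fst z" "snd z"] z False by auto
        then show ?thesis using False unfolding W_def by (simp add: algebra_simps)
      qed
      then show ?thesis by (simp add: sum.distrib sum_subtractf)
    qed
    also have "(\<Sum>z\<in>V\<times>V. (if fst z \<noteq> snd z then ?a {fst z, snd z} * y (hf (fst z) (snd z)) else 0))
        = canon_lhs ?E ?a y"
      using canon_eq[OF fin] finVV by (simp add: sum.inter_filter)
    also have "(\<Sum>z\<in>V\<times>V. real_of_int (\<alpha> (fst z)) * y (hf (fst z) (snd z))) = (\<Sum>u\<in>V. real_of_int (\<alpha> u))"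
    proof -
      have "(\<Sum>z\<in>V\<times>V. real_of_int (\<alpha> (fst z)) * y (hf (fst z) (snd z)))
          = (\<Sum>u\<in>V. \<Sum>w\<in>V. real_of_int (\<alpha> u) * y (hf u w))"
        by (subst sum.cartesian_product) (simp add: split_def)
      also have "\<dots> = (\<Sum>u\<in>V. real_of_int (\<alpha> u) * (\<Sum>w\<in>V. y (hf u w)))"
        by (simp add: sum_distrib_left)
      also have "\<dots> = (\<Sum>u\<in>V. real_of_int (\<alpha> u))" using P_row[OF y fin] by simp
      finally show ?thesis .
    qed
    also have "(\<Sum>z\<in>V\<times>V. real_of_int (\<alpha> (snd z)) * y (hf (fst z) (snd z))) = (\<Sum>u\<in>V. real_of_int (\<alpha> u))"
    proof -
      have "(\<Sum>z\<in>V\<times>V. real_of_int (\<alpha> (snd z)) * y (hf (fst z) (snd z)))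
          = (\<Sum>u\<in>V. \<Sum>w\<in>V. real_of_int (\<alpha> w) * y (hf u w))"
        by (subst sum.cartesian_product) (simp add: split_def)
      also have "\<dots> = (\<Sum>w\<in>V. real_of_int (\<alpha> w) * (\<Sum>u\<in>V. y (hf u w)))"
        by (subst sum.swap) (simp add: sum_distrib_left)
      also have "\<dots> = (\<Sum>u\<in>V. real_of_int (\<alpha> u))" using P_col[OF y fin] by simp
      finally show ?thesis .
    qed
    finally show ?thesis by simp
  qed
  have A_le: "m div (p*p) \<le> p"
  proof -
    have "m div (p*p) \<le> p^3 div (p*p)" using p(2) by (rule div_le_mono)
    also have "p^3 div (p*p) = p" using p(1) by (simp add: power3_eq_cube)
    finally show ?thesis .
  qed
  have sub: "ah ` ?H \<subseteq> SS p (m div (p*p)) m k"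
  proof
    fix x assume "x \<in> ah ` ?H"
    then obtain u w where uw: "u \<in> V" "w \<in> V" "x = W u w" unfolding H using ahW by auto
    show "x \<in> SS p (m div (p*p)) m k"
    proof (cases "u = w")
      case True then show ?thesis using uw unfolding W_def SS_def by simp
    next
      case False
      show ?thesis
      proof (cases "u \<in> VC \<and> w \<in> VC")
        case True
        have i: "idx u \<in> {1..m}" "idx w \<in> {1..m}" using True unfolding idx_def VC_def m_def
          by (meson inv_into_into)+
        have "x = int (ell m (idx u) (idx w)) + XX p (idx u) - XX p (idx w)"
          using uw True False unfolding W_def aI_def \<alpha>_def idx_def VC_def m_def by simp
        then show ?thesis using ell_in[of p "idx u" m "idx w"] p(1) i unfolding SS_def by auto
      next
        case False2: False
        show ?thesis
        proof (cases "u \<in> VC")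
          case True
          have "w \<notin> VC" using True False2 by blast
          have i: "idx u \<in> {1..m}" using True unfolding idx_def VC_def m_def by (meson inv_into_into)
          have "x = int k + XX p (idx u)"
            using uw True \<open>w \<notin> VC\<close> False unfolding W_def aI_def \<alpha>_def VC_def by simp
          then show ?thesis using XX_in[of p "idx u" m] p(1) i unfolding SS_def by auto
        next
          case False3: False
          show ?thesis
          proof (cases "w \<in> VC")
            case True
            have i: "idx w \<in> {1..m}" using True unfolding idx_def VC_def m_def by (meson inv_into_into)
            have "x = int k - XX p (idx w)"
              using uw True False3 False unfolding W_def aI_def \<alpha>_def VC_def by simp
            then show ?thesis using XX_in[of p "idx w" m] p(1) i unfolding SS_def by auto
          next
            case False4: False
            have "x = 1" using uw False3 False4 False unfolding W_def aI_def \<alpha>_def VC_def by simp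
            then show ?thesis unfolding SS_def by simp
          qed
        qed
      qed
    qed
  qed
  have "card (ah ` ?H) \<le> 46 * p^2"
    using card_mono[OF finite_SS sub] card_SS[OF A_le p(1), of m k] by linarith
  then have "real (card (ah ` ?H)) \<le> real (46 * p^2)"
    by (simp only: of_nat_le_iff)
  then have "real (card (ah ` ?H)) \<le> 46 * real p ^ 2"
    by simp
  also have "\<dots> \<le> 46 * (4 * real n powr (2/3))"
  proof -
    have "p^3 \<le> 8*n" using p(3) mn(1) by linarith
    moreover have "n \<ge> 1" using n5 by linarith
    ultimately have "real p ^ 2 \<le> 4 * real n powr (2/3)" using p(1) by (rule p_bound)
    then show ?thesis by linarith
  qed
  also have "\<dots> \<le> 200 * real n powr (2/3)"
  proof -
    have "0 \<le> real n powr (2/3)" by (rule powr_ge_zero)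
    then show ?thesis by linarith
  qed
  finally have cardb: "real (card (ah ` ?H)) \<le> 200 * real n powr (2/3)" .
  have Feq: "{y \<in> P_hat V ?E. canon_lhs ?E ?a y = real (2*k+1)} =
      {y \<in> P_hat V ?E. (\<Sum>e\<in>?H. real_of_int (ah e) * y e) = real_of_int (int (2*k+1))}"
  proof (rule Collect_cong)
    fix y
    show "(y \<in> P_hat V ?E \<and> canon_lhs ?E ?a y = real (2*k+1)) =
      (y \<in> P_hat V ?E \<and> (\<Sum>e\<in>?H. real_of_int (ah e) * y e) = real_of_int (int (2*k+1)))"
    proof (cases "y \<in> P_hat V ?E")
      case True then show ?thesis using key[OF True] by (simp only: simp_thms of_int_of_nat_eq)
    next
      case False then show ?thesis by simp
    qed
  qed
  show "let E = Kn_edges V;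
           F = {y \<in> P_hat V E. canon_lhs E (C_induced_coeff V k v s t) y = real (2*k+1)}
       in \<exists>(ah :: (nat \<times> bool) set \<Rightarrow> int) (bh :: int).
            F = {y \<in> P_hat V E. (\<Sum>e\<in>hat_edges V E. real_of_int (ah e) * y e) = real_of_int bh}
            \<and> real (card (ah ` hat_edges V E)) \<le> 200 * real n powr (2/3)"
    unfolding Let_def by (intro exI[of _ ah] exI[of _ "int (2*k+1)"] conjI Feq cardb)
qed (simp)


end
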